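(* Fix $\epsilon>0$ and $\alpha\in(1,\infty)$. Let $c:\mathbb{R}\to[0,\infty)$ satisfy $c(z)=c(-z)$ and $c(z)\le c(a)+c(z-a)$ for all $z,a\in\mathbb{R}$, let $\eta(\theta)=\kappa/\theta$ for a constant $\kappa>0$, and for $\theta>0$ let $N\sim\mathrm{Exp}(\theta)$ denote noise with density $P_N(z)= e^{-\eta(\theta)c(z)}/\int e^{-\eta(\theta)c(u)}\,\mathrm{d}u$ (assumed normalizable). For each prior $\rho$ and pair $(s_i,s_j)\in\mathbb{S}$, let $\pi^*_{i,j,\rho}$ be the comonotone coupling of $P_{X|s_i,\rho}$ and $P_{X|s_j,\rho}$ and suppose $\theta_{i,j,\rho}>0$ satisfies $$\int e^{\alpha\,\eta(\theta_{i,j,\rho})\,c(x-x')}\,\mathrm{d}\pi^*_{i,j,\rho}(x,x')=e^{(\alpha-1)\epsilon}.$$ Let $\theta$ be the maximum of $\theta_{i,j,\rho}$ over all $(s_i,s_j)\in\mathbb{S}$ and all $\rho$ (assumed to exist). Then releasing $Y=X+N$ with $N\sim\mathrm{Exp}(\theta)$ independent of $(X,S)$ attains $(\alpha,\epsilon)$-Rényi pufferfish privacy.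
   Context: Setting: a sensitive secret $S$ and real-valued data $X$. For each secret value $s$ and each adversarial prior belief $\rho$ (ranging over a given set of priors), $X$ given $S=s$ has a density $P_{X|s,\rho}$ on $\mathbb{R}$. $\mathbb{S}$ is a given set of ordered secret pairs. The released data is $Y=X+N$ with $N$ independent of $(X,S)$, so $P_{Y|S}(y|s,\rho)=\int P_N(y-x)P_{X|S}(x|s,\rho)\,\mathrm{d}x$. For densities $P\ll Q$, $D_\alpha(P\|Q)=\frac{1}{\alpha-1}\log\int P^\alpha Q^{1-\alpha}$. $Y$ satisfies $(\alpha,\epsilon)$-Rényi pufferfish privacy if $D_\alpha(P_{Y|s_i,\rho}\|P_{Y|s_j,\rho})\le\epsilon$ for all $\rho$ and all $(s_i,s_j)\in\mathbb{S}$. The comonotone (Kantorovich optimal) coupling of two distributions on $\mathbb{R}$ with CDFs $F_i,F_j$ is the joint distribution with joint CDF $\min\{F_i(x),F_j(x')\}$, i.e. the law of $(F_i^{-1}(U),F_j^{-1}(U))$, $U\sim\mathrm{Unif}(0,1)$. The paper only specifies $\eta(\theta)\propto 1/\theta$. *)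

theory Defs
  imports "HOL-Probability.Probability"
begin

definition cdf_of :: "(real \<Rightarrow> real) \<Rightarrow> real \<Rightarrow> real" where
  "cdf_of P x = (LINT t:{..x}|lborel. P t)"

definition quantile :: "(real \<Rightarrow> real) \<Rightarrow> real \<Rightarrow> real" where
  "quantile F u = Inf {x. u \<le> F x}"

definition comonotone_coupling :: "(real \<Rightarrow> real) \<Rightarrow> (real \<Rightarrow> real) \<Rightarrow> (real \<times> real) measure" where
  "comonotone_coupling P Q =
     distr (uniform_measure lborel {0<..<1}) borel
       (\<lambda>u. (quantile (cdf_of P) u, quantile (cdf_of Q) u))"

definition eta :: "real \<Rightarrow> real \<Rightarrow> real" where
  "eta \<kappa> \<theta> = \<kappa> / \<theta>"

definition noise_density :: "(real \<Rightarrow> real) \<Rightarrow> real \<Rightarrow> real \<Rightarrow> real \<Rightarrow> real" where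
  "noise_density c \<kappa> \<theta> z =
     exp (- eta \<kappa> \<theta> * c z) / (LINT u|lborel. exp (- eta \<kappa> \<theta> * c u))"

definition output_density :: "(real \<Rightarrow> real) \<Rightarrow> (real \<Rightarrow> real) \<Rightarrow> real \<Rightarrow> real" where
  "output_density PN PX y = (LINT x|lborel. PN (y - x) * PX x)"

definition renyi_div :: "real \<Rightarrow> (real \<Rightarrow> real) \<Rightarrow> (real \<Rightarrow> real) \<Rightarrow> ereal" where
  "renyi_div \<alpha> P Q =
    (let I = (\<integral>\<^sup>+ x. ennreal (P x powr \<alpha> * Q x powr (1 - \<alpha>)) \<partial>lborel) in
     if I = \<infinity> then \<infinity> else ereal (ln (enn2real I) / (\<alpha> - 1)))"

definition renyi_pufferfish_private ::
  "real \<Rightarrow> real \<Rightarrow> ('s \<times> 's) set \<Rightarrow> 'r set \<Rightarrow> ('s \<Rightarrow> 'r \<Rightarrow> real \<Rightarrow> real) \<Rightarrow> bool" where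
  "renyi_pufferfish_private \<alpha> \<epsilon> SS Rho PY \<longleftrightarrow>
     (\<forall>\<rho>\<in>Rho. \<forall>(si, sj)\<in>SS. renyi_div \<alpha> (PY si \<rho>) (PY sj \<rho>) \<le> ereal \<epsilon>)"

end

theory Submission
  imports Defs
begin

lemma density_real_distribution:
  fixes P :: "real \<Rightarrow> real"
  assumes [measurable]: "P \<in> borel_measurable borel" and nn: "\<And>x. P x \<ge> 0"
    and one: "(\<integral>\<^sup>+ x. ennreal (P x) \<partial>lborel) = 1"
  shows "real_distribution (density lborel P)"
  unfolding real_distribution_def real_distribution_axioms_def
  by (auto intro!: prob_spaceI simp: emeasure_density one)

lemma cdf_of_eq_cdf:
  fixes P :: "real \<Rightarrow> real"
  assumes [measurable]: "P \<in> borel_measurable borel" and nn: "\<And>x. P x \<ge> 0"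
  shows "cdf_of P = cdf (density lborel P)"
proof
  fix x
  have "cdf (density lborel P) x = enn2real (\<integral>\<^sup>+ t. ennreal (P t) * indicator {..x} t \<partial>lborel)"
    by (simp add: cdf_def measure_def emeasure_density)
  also have "\<dots> = enn2real (\<integral>\<^sup>+ t. ennreal (indicator {..x} t * P t) \<partial>lborel)"
    by (intro arg_cong[where f=enn2real] nn_integral_cong) (auto simp: indicator_def)
  also have "\<dots> = cdf_of P x"
    unfolding cdf_of_def set_lebesgue_integral_def
    by (subst integral_eq_nn_integral) (auto simp: nn)
  finally show "cdf_of P x = cdf (density lborel P) x" by simp
qed

lemma cdf_density_cont:
  fixes P :: "real \<Rightarrow> real"
  assumes [measurable]: "P \<in> borel_measurable borel" and nn: "\<And>x. P x \<ge> 0"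
    and one: "(\<integral>\<^sup>+ x. ennreal (P x) \<partial>lborel) = 1"
  shows "isCont (cdf (density lborel P)) x"
proof -
  have rd: "real_distribution (density lborel P)"
    by (rule density_real_distribution[OF assms])
  have "(\<integral>\<^sup>+ t. ennreal (P t) * indicator {x} t \<partial>lborel) = (\<integral>\<^sup>+ t. 0 \<partial>(lborel::real measure))"
    by (intro nn_integral_cong_AE eventually_mono[OF AE_lborel_singleton[of x]]) (auto simp: indicator_def)
  then have "measure (density lborel P) {x} = 0"
    by (simp add: measure_def emeasure_density)
  then show ?thesis
    using finite_borel_measure.isCont_cdf[OF real_distribution.finite_borel_measure_M[OF rd]]
    by simp
qed

lemma quantile_galois:
  fixes F :: "real \<Rightarrow> real"
  assumes mono: "mono F" and cont: "continuous_on UNIV F"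
    and top: "(F \<longlongrightarrow> 1) at_top" and bot: "(F \<longlongrightarrow> 0) at_bot"
    and u: "0 < u" "u < 1"
  shows "quantile F u \<le> x \<longleftrightarrow> u \<le> F x"
proof -
  define S where "S = {x. u \<le> F x}"
  have "eventually (\<lambda>x. F x > u) at_top" using top u by (intro order_tendstoD(1)) auto
  then obtain a where a: "\<forall>x\<ge>a. F x > u" by (auto simp: eventually_at_top_linorder)
  hence ne: "S \<noteq> {}" unfolding S_def by (auto intro!: exI[of _ a] less_imp_le)
  have "eventually (\<lambda>x. F x < u) at_bot" using bot u by (intro order_tendstoD(2)) auto
  then obtain b where b: "\<forall>x\<le>b. F x < u" by (auto simp: eventually_at_bot_linorder)
  hence bdd: "bdd_below S" unfolding bdd_below_def S_def
    by (metis linorder_not_le mem_Collect_eq order_less_imp_le)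
  have cl: "closed S" unfolding S_def by (rule closed_Collect_le) (auto intro: continuous_on_const cont)
  have inS: "Inf S \<in> S" by (rule closed_contains_Inf[OF ne bdd cl])
  show ?thesis
  proof
    assume "quantile F u \<le> x"
    then have "F (Inf S) \<le> F x" unfolding quantile_def S_def using mono by (auto dest: monoD)
    then show "u \<le> F x" using inS unfolding S_def by auto
  next
    assume "u \<le> F x"
    hence "x \<in> S" unfolding S_def by auto
    then show "quantile F u \<le> x" unfolding quantile_def S_def[symmetric] by (rule cInf_lower[OF _ bdd])
  qed
qed

lemma quantile_distr:
  fixes P :: "real \<Rightarrow> real"
  assumes [measurable]: "P \<in> borel_measurable borel" and nn: "\<And>x. P x \<ge> 0"
    and one: "(\<integral>\<^sup>+ x. ennreal (P x) \<partial>lborel) = 1"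
  shows "quantile (cdf_of P) \<in> borel_measurable borel"
    and "distr (uniform_measure lborel {0<..<1}) borel (quantile (cdf_of P)) = density lborel P"
proof -
  define M where "M = density lborel P"
  define F where "F = cdf_of P"
  define q where "q = quantile F"
  have rd: "real_distribution M" unfolding M_def by (rule density_real_distribution[OF assms])
  have FM: "F = cdf M" unfolding F_def M_def by (rule cdf_of_eq_cdf[OF assms(1,2)])
  have mono: "mono F" unfolding FM
    using finite_borel_measure.cdf_nondecreasing[OF real_distribution.finite_borel_measure_M[OF rd]]
    by (auto intro: monoI)
  have cont: "continuous_on UNIV F" unfolding FM M_def
    by (intro continuous_at_imp_continuous_on ballI cdf_density_cont[OF assms])
  have top: "(F \<longlongrightarrow> 1) at_top" unfolding FM by (rule real_distribution.cdf_lim_at_top_prob[OF rd])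
  have bot: "(F \<longlongrightarrow> 0) at_bot" unfolding FM
    by (rule finite_borel_measure.cdf_lim_at_bot[OF real_distribution.finite_borel_measure_M[OF rd]])
  have F0: "F x \<ge> 0" for x unfolding FM
    by (rule finite_borel_measure.cdf_nonneg[OF real_distribution.finite_borel_measure_M[OF rd]])
  have F1: "F x \<le> 1" for x unfolding FM by (rule real_distribution.cdf_bounded_prob[OF rd])
  have gal: "0 < u \<Longrightarrow> u < 1 \<Longrightarrow> q u \<le> x \<longleftrightarrow> u \<le> F x" for u x
    unfolding q_def by (rule quantile_galois[OF mono cont top bot])
  have qneg: "q u = Inf UNIV" if "u \<le> 0" for u
  proof -
    have "{x. u \<le> F x} = UNIV" using that F0 by (auto intro: order_trans)
    then show ?thesis unfolding q_def quantile_def by simp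
  qed
  have qbig: "q u = Inf {}" if "u > 1" for u
  proof -
    have "{x. u \<le> F x} = {}" using that F1 by (auto simp: not_le intro: le_less_trans)
    then show ?thesis unfolding q_def quantile_def by simp
  qed
  have qmeas: "q \<in> borel_measurable borel"
  proof (rule borel_measurable_piecewise_mono[where C="{{..0}, {0<..<1}, {1}, {1<..}}"])
    show "\<Union>{{..0}, {0<..<1}, {1}, {1<..}} = (UNIV :: real set)"
      by (auto simp: not_le)
    fix c assume c: "c \<in> {{..0}, {0<..<1::real}, {1}, {1<..}}"
    then show "c \<in> sets borel" by auto
    show "mono_on c q"
    proof (rule mono_onI)
      fix r s assume rs: "r \<in> c" "s \<in> c" "r \<le> s"
      show "q r \<le> q s"
      proof -
        consider "c = {..0}" | "c = {0<..<1}" | "c = {1}" | "c = {1<..}" using c by auto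
        then show ?thesis
        proof cases
          case 2
          then have "s \<le> F (q s)" using gal[of s "q s"] rs by auto
          then show ?thesis using gal[of r "q s"] rs 2 by auto
        qed (use rs qneg qbig in auto)
      qed
    qed
  qed auto
  then show "quantile (cdf_of P) \<in> borel_measurable borel" unfolding q_def F_def .
  have U01: "emeasure lborel {0<..<1::real} = 1" by simp
  have pU: "prob_space (uniform_measure lborel {0<..<1::real})"
    by (rule prob_space_uniform_measure) (auto simp: U01)
  have qU: "q \<in> borel_measurable (uniform_measure lborel {0<..<1})"
    using qmeas by (simp add: measurable_cong_sets[OF sets_uniform_measure refl])
  have rd2: "real_distribution (distr (uniform_measure lborel {0<..<1}) borel q)"
    by (rule prob_space.real_distribution_distr[OF pU qU])
  have "cdf (distr (uniform_measure lborel {0<..<1}) borel q) = cdf M"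
  proof
    fix x
    have "{0<..<1} \<inter> (q -` {..x}) = {0<..<1} \<inter> {..F x}"
      using gal by auto
    moreover have "emeasure lborel ({0<..<1} \<inter> {..F x}) = ennreal (F x)"
    proof (cases "F x < 1")
      case True
      then have "{0<..<1} \<inter> {..F x} = {0<..F x}" by auto
      then show ?thesis using F0[of x] by simp
    next
      case False
      then have "F x = 1" using F1[of x] by auto
      moreover have "{0<..<1} \<inter> {..1::real} = {0<..<1}" by auto
      ultimately show ?thesis by simp
    qed
    ultimately have "emeasure (distr (uniform_measure lborel {0<..<1}) borel q) {..x} = ennreal (F x)"
      using qU measurable_sets[OF qmeas atMost_borel[of x]] by (simp add: emeasure_distr U01 divide_ennreal_def)
    then show "cdf (distr (uniform_measure lborel {0<..<1}) borel q) x = cdf M x"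
      using F0[of x] FM by (simp add: cdf_def measure_def)
  qed
  then show "distr (uniform_measure lborel {0<..<1}) borel (quantile (cdf_of P)) = density lborel P"
    using cdf_unique[OF rd2 rd] unfolding q_def F_def M_def by simp
qed

lemma coupling_marginals:
  fixes P Q :: "real \<Rightarrow> real" and f :: "real \<Rightarrow> ennreal"
  assumes [measurable]: "P \<in> borel_measurable borel" and nnP: "\<And>x. P x \<ge> 0"
    and oneP: "(\<integral>\<^sup>+ x. ennreal (P x) \<partial>lborel) = 1"
  assumes [measurable]: "Q \<in> borel_measurable borel" and nnQ: "\<And>x. Q x \<ge> 0"
    and oneQ: "(\<integral>\<^sup>+ x. ennreal (Q x) \<partial>lborel) = 1"
  assumes f[measurable]: "f \<in> borel_measurable borel"
  shows "(\<integral>\<^sup>+ p. f (fst p) \<partial>comonotone_coupling P Q) = (\<integral>\<^sup>+ x. ennreal (P x) * f x \<partial>lborel)"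
    and "(\<integral>\<^sup>+ p. f (snd p) \<partial>comonotone_coupling P Q) = (\<integral>\<^sup>+ x. ennreal (Q x) * f x \<partial>lborel)"
proof -
  let ?U = "uniform_measure lborel {0<..<1::real}"
  note qP = quantile_distr[OF assms(1-3)] and qQ = quantile_distr[OF assms(4-6)]
  have [measurable]: "quantile (cdf_of P) \<in> borel_measurable ?U" "quantile (cdf_of Q) \<in> borel_measurable ?U"
    using qP(1) qQ(1) by (simp_all add: measurable_cong_sets[OF sets_uniform_measure refl])
  have fstm: "fst \<in> borel_measurable (borel::(real\<times>real) measure)"
    "snd \<in> borel_measurable (borel::(real\<times>real) measure)"
    by (auto intro!: borel_measurable_continuous_onI continuous_intros)
  have [measurable]: "(\<lambda>p. f (fst p)) \<in> borel_measurable (borel::(real\<times>real) measure)"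
    "(\<lambda>p. f (snd p)) \<in> borel_measurable (borel::(real\<times>real) measure)"
    using measurable_compose[OF fstm(1) f] measurable_compose[OF fstm(2) f] by (auto simp: o_def)
  have g: "(\<lambda>u. (quantile (cdf_of P) u, quantile (cdf_of Q) u)) \<in> borel_measurable ?U"
    by measurable
  have "(\<integral>\<^sup>+ p. f (fst p) \<partial>comonotone_coupling P Q) = (\<integral>\<^sup>+ u. f (quantile (cdf_of P) u) \<partial>?U)"
    unfolding comonotone_coupling_def by (subst nn_integral_distr[OF g]) auto
  also have "\<dots> = (\<integral>\<^sup>+ x. f x \<partial>distr ?U borel (quantile (cdf_of P)))"
    by (subst nn_integral_distr) auto
  also have "\<dots> = (\<integral>\<^sup>+ x. ennreal (P x) * f x \<partial>lborel)"
    unfolding qP(2) by (simp add: nn_integral_density)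
  finally show "(\<integral>\<^sup>+ p. f (fst p) \<partial>comonotone_coupling P Q) = (\<integral>\<^sup>+ x. ennreal (P x) * f x \<partial>lborel)" .
  have "(\<integral>\<^sup>+ p. f (snd p) \<partial>comonotone_coupling P Q) = (\<integral>\<^sup>+ u. f (quantile (cdf_of Q) u) \<partial>?U)"
    unfolding comonotone_coupling_def by (subst nn_integral_distr[OF g]) auto
  also have "\<dots> = (\<integral>\<^sup>+ x. f x \<partial>distr ?U borel (quantile (cdf_of Q)))"
    by (subst nn_integral_distr) auto
  also have "\<dots> = (\<integral>\<^sup>+ x. ennreal (Q x) * f x \<partial>lborel)"
    unfolding qQ(2) by (simp add: nn_integral_density)
  finally show "(\<integral>\<^sup>+ p. f (snd p) \<partial>comonotone_coupling P Q) = (\<integral>\<^sup>+ x. ennreal (Q x) * f x \<partial>lborel)" .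
qed

lemma fst_real_meas[measurable]: "fst \<in> borel_measurable (borel::(real\<times>real) measure)"
  and snd_real_meas[measurable]: "snd \<in> borel_measurable (borel::(real\<times>real) measure)"
  by (auto intro!: borel_measurable_continuous_onI continuous_intros)

lemma coupling_prob:
  fixes P Q :: "real \<Rightarrow> real"
  assumes [measurable]: "P \<in> borel_measurable borel" and nnP: "\<And>x. P x \<ge> 0"
    and oneP: "(\<integral>\<^sup>+ x. ennreal (P x) \<partial>lborel) = 1"
  assumes [measurable]: "Q \<in> borel_measurable borel" and nnQ: "\<And>x. Q x \<ge> 0"
    and oneQ: "(\<integral>\<^sup>+ x. ennreal (Q x) \<partial>lborel) = 1"
  shows "prob_space (comonotone_coupling P Q)"
    and "sets (comonotone_coupling P Q) = sets borel"
proof -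
  let ?U = "uniform_measure lborel {0<..<1::real}"
  note qP = quantile_distr[OF assms(1-3)] and qQ = quantile_distr[OF assms(4-6)]
  have [measurable]: "quantile (cdf_of P) \<in> borel_measurable ?U" "quantile (cdf_of Q) \<in> borel_measurable ?U"
    using qP(1) qQ(1) by (simp_all add: measurable_cong_sets[OF sets_uniform_measure refl])
  have g: "(\<lambda>u. (quantile (cdf_of P) u, quantile (cdf_of Q) u)) \<in> borel_measurable ?U"
    by measurable
  have pU: "prob_space ?U"
    by (rule prob_space_uniform_measure) auto
  show "prob_space (comonotone_coupling P Q)"
    unfolding comonotone_coupling_def by (rule prob_space.prob_space_distr[OF pU g])
  show "sets (comonotone_coupling P Q) = sets borel"
    unfolding comonotone_coupling_def by simp
qed


lemma young_pt:
  fixes a b t \<alpha> :: real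
  assumes "a \<ge> 0" "b > 0" "t > 0" "\<alpha> > 1"
  shows "\<alpha> * t powr (\<alpha> - 1) * a \<le> a powr \<alpha> * b powr (1 - \<alpha>) + (\<alpha> - 1) * t powr \<alpha> * b"
proof (cases "a = 0")
  case True then show ?thesis using assms by simp
next
  case False
  then have a: "a > 0" using assms by simp
  define q where "q = \<alpha> / (\<alpha> - 1)"
  have q1: "q > 1" and pq: "1/\<alpha> + 1/q = 1" using assms by (auto simp: q_def field_simps)
  have Y: "(a / b) * t powr (\<alpha> - 1) \<le> (a/b) powr \<alpha> / \<alpha> + (t powr (\<alpha> - 1)) powr q / q"
    by (rule Youngs_inequality) (use assms q1 pq in auto)
  have tq: "(t powr (\<alpha> - 1)) powr q = t powr \<alpha>"
    using assms by (simp add: powr_powr q_def)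
  have ab: "b * (a / b) powr \<alpha> = a powr \<alpha> * b powr (1 - \<alpha>)"
    using assms a by (simp add: powr_divide powr_diff)
  have "\<alpha> * t powr (\<alpha> - 1) * a = (\<alpha> * b) * ((a / b) * t powr (\<alpha> - 1))"
    using assms by (simp add: field_simps)
  also have "\<dots> \<le> (\<alpha> * b) * ((a/b) powr \<alpha> / \<alpha> + t powr \<alpha> / q)"
    using Y tq assms by (intro mult_left_mono) auto
  also have "\<dots> = b * (a / b) powr \<alpha> + (\<alpha> - 1) * t powr \<alpha> * b"
    using assms by (simp add: q_def field_simps)
  finally show ?thesis using ab by simp
qed

lemma jensen_pair:
  fixes a b :: "'a \<Rightarrow> real" and \<alpha> A B :: real
  assumes [measurable]: "a \<in> borel_measurable M" "b \<in> borel_measurable M"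
    and a0: "\<And>x. a x \<ge> 0" and b0: "\<And>x. b x > 0" and al: "\<alpha> > 1"
    and A: "A > 0" "(\<integral>\<^sup>+ x. ennreal (a x) \<partial>M) = ennreal A"
    and B: "B > 0" "(\<integral>\<^sup>+ x. ennreal (b x) \<partial>M) = ennreal B"
  shows "ennreal (A powr \<alpha> * B powr (1 - \<alpha>)) \<le> (\<integral>\<^sup>+ x. ennreal (a x powr \<alpha> * b x powr (1 - \<alpha>)) \<partial>M)"
proof -
  define t where "t = A / B"
  have t: "t > 0" using A B by (simp add: t_def)
  define K where "K = A powr \<alpha> * B powr (1 - \<alpha>)"
  have K0: "K \<ge> 0" by (simp add: K_def)
  have e1: "\<alpha> * t powr (\<alpha> - 1) * A = \<alpha> * K"
    using A B unfolding K_def t_def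
    by (simp add: powr_divide powr_diff)
  have e2: "(\<alpha> - 1) * t powr \<alpha> * B = (\<alpha> - 1) * K"
    using A B unfolding K_def t_def
    by (simp add: powr_divide powr_diff)
  define X where "X = (\<integral>\<^sup>+ x. ennreal (a x powr \<alpha> * b x powr (1 - \<alpha>)) \<partial>M)"
  have "ennreal (\<alpha> * t powr (\<alpha> - 1)) * ennreal A = (\<integral>\<^sup>+ x. ennreal (\<alpha> * t powr (\<alpha> - 1)) * ennreal (a x) \<partial>M)"
    using A by (simp add: nn_integral_cmult)
  also have "\<dots> \<le> (\<integral>\<^sup>+ x. ennreal (a x powr \<alpha> * b x powr (1 - \<alpha>)) + ennreal ((\<alpha> - 1) * t powr \<alpha>) * ennreal (b x) \<partial>M)"
  proof (rule nn_integral_mono)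
    fix x
    have "\<alpha> * t powr (\<alpha> - 1) * a x \<le> a x powr \<alpha> * b x powr (1 - \<alpha>) + (\<alpha> - 1) * t powr \<alpha> * b x"
      by (rule young_pt[OF a0 b0 t al])
    then show "ennreal (\<alpha> * t powr (\<alpha> - 1)) * ennreal (a x) \<le> ennreal (a x powr \<alpha> * b x powr (1 - \<alpha>)) + ennreal ((\<alpha> - 1) * t powr \<alpha>) * ennreal (b x)"
      using al a0[of x] b0[of x] by (simp add: ennreal_mult'[symmetric] ennreal_plus[symmetric] del: ennreal_plus)
  qed
  also have "\<dots> = X + ennreal ((\<alpha> - 1) * t powr \<alpha>) * ennreal B"
    unfolding X_def using B by (subst nn_integral_add) (auto simp: nn_integral_cmult)
  finally have "ennreal (\<alpha> * K) \<le> X + ennreal ((\<alpha> - 1) * K)"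
    using al t A B e1 e2 by (simp add: ennreal_mult'[symmetric])
  then have "ennreal K \<le> X"
  proof (cases X)
    case (real x)
    with \<open>ennreal (\<alpha> * K) \<le> X + ennreal ((\<alpha> - 1) * K)\<close> have "\<alpha> * K \<le> x + (\<alpha> - 1) * K"
      using al K0 by (simp add: ennreal_plus[symmetric] del: ennreal_plus)
    then show ?thesis using real by (simp add: algebra_simps)
  qed simp
  then show ?thesis unfolding K_def X_def .
qed


theorem corollary1:
  fixes \<epsilon> \<alpha> \<kappa> \<theta> :: real
    and c :: "real \<Rightarrow> real"
    and SS :: "('s \<times> 's) set"
    and Rho :: "'r set"
    and PX :: "'s \<Rightarrow> 'r \<Rightarrow> real \<Rightarrow> real"
    and th :: "'s \<Rightarrow> 's \<Rightarrow> 'r \<Rightarrow> real"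
  assumes eps: "\<epsilon> > 0"
    and alpha: "\<alpha> > 1"
    and kappa: "\<kappa> > 0"
    and c_meas: "c \<in> borel_measurable borel"
    and c_nonneg: "\<And>z. c z \<ge> 0"
    and c_sym: "\<And>z. c z = c (- z)"
    and c_tri: "\<And>z a. c z \<le> c a + c (z - a)"
    and PX_meas: "\<And>s \<rho>. PX s \<rho> \<in> borel_measurable borel"
    and PX_nonneg: "\<And>s \<rho> x. PX s \<rho> x \<ge> 0"
    and PX_prob: "\<And>s \<rho>. (\<integral>\<^sup>+ x. ennreal (PX s \<rho> x) \<partial>lborel) = 1"
    and th_pos: "\<And>si sj \<rho>. (si, sj) \<in> SS \<Longrightarrow> \<rho> \<in> Rho \<Longrightarrow> th si sj \<rho> > 0"
    and th_eq: "\<And>si sj \<rho>. (si, sj) \<in> SS \<Longrightarrow> \<rho> \<in> Rho \<Longrightarrow>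
        (\<integral>\<^sup>+ p. ennreal (exp (\<alpha> * eta \<kappa> (th si sj \<rho>) * c (fst p - snd p)))
           \<partial>comonotone_coupling (PX si \<rho>) (PX sj \<rho>))
        = ennreal (exp ((\<alpha> - 1) * \<epsilon>))"
    and theta_attained: "\<exists>(si, sj)\<in>SS. \<exists>\<rho>\<in>Rho. \<theta> = th si sj \<rho>"
    and theta_max: "\<And>si sj \<rho>. (si, sj) \<in> SS \<Longrightarrow> \<rho> \<in> Rho \<Longrightarrow> th si sj \<rho> \<le> \<theta>"
    and normalizable: "integrable lborel (\<lambda>u. exp (- eta \<kappa> \<theta> * c u))"
  shows "renyi_pufferfish_private \<alpha> \<epsilon> SS Rho
           (\<lambda>s \<rho>. output_density (noise_density c \<kappa> \<theta>) (PX s \<rho>))"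
proof -
  obtain si0 sj0 \<rho>0 where h0: "(si0, sj0) \<in> SS" "\<rho>0 \<in> Rho" "\<theta> = th si0 sj0 \<rho>0"
    using theta_attained by auto
  then have theta: "\<theta> > 0" using th_pos by auto
  define \<eta> where "\<eta> = eta \<kappa> \<theta>"
  have eta_pos: "\<eta> > 0" using kappa theta by (simp add: \<eta>_def eta_def)
  note [measurable] = c_meas PX_meas
  define Z where "Z = (LINT u|lborel. exp (- \<eta> * c u))"
  have intZ: "integrable lborel (\<lambda>u. exp (- \<eta> * c u))" using normalizable by (simp add: \<eta>_def)
  have nnZ: "(\<integral>\<^sup>+ u. ennreal (exp (- \<eta> * c u)) \<partial>lborel) = ennreal Z"
    unfolding Z_def by (rule nn_integral_eq_integral[OF intZ]) auto
  have Z0: "Z \<ge> 0" unfolding Z_def by (rule integral_nonneg_AE) simp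
  have Zpos: "Z > 0"
  proof (rule ccontr)
    assume "\<not> Z > 0"
    then have "Z = 0" using Z0 by simp
    then have "(\<integral>\<^sup>+ u. ennreal (exp (- \<eta> * c u)) \<partial>lborel) = 0" using nnZ by simp
    then have "AE u in lborel. ennreal (exp (- \<eta> * c u)) = 0"
      by (subst (asm) nn_integral_0_iff_AE) auto
    then have "AE u in (lborel::real measure). False" by (auto elim: eventually_mono)
    then have "emeasure (lborel::real measure) (space lborel) = 0"
      using ae_filter_eq_bot_iff trivial_limit_def by metis
    then show False by simp
  qed
  define N where "N = noise_density c \<kappa> \<theta>"
  have N_eq: "N z = exp (- \<eta> * c z - ln Z)" for z
    unfolding N_def noise_density_def \<eta>_def[symmetric] Z_def[symmetric] using Zpos
    by (simp add: exp_diff)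
  have N_pos: "N z > 0" for z by (simp add: N_eq)
  have lnN: "ln (N z) = - \<eta> * c z - ln Z" for z by (simp add: N_eq)
  have N_eq2: "N z = exp (- \<eta> * c z) / Z" for z
    unfolding N_def noise_density_def \<eta>_def[symmetric] Z_def[symmetric] ..
  have N_le: "N z \<le> 1 / Z" for z
  proof -
    have "exp (- \<eta> * c z) \<le> 1" using eta_pos c_nonneg[of z] by simp
    then show ?thesis unfolding N_eq2 using Zpos by (simp add: divide_right_mono)
  qed
  have N_meas[measurable]: "N \<in> borel_measurable borel"
    unfolding N_def noise_density_def by measurable
  have N_int: "(\<integral>\<^sup>+ z. ennreal (N z) \<partial>lborel) = 1"
  proof -
    have "(\<integral>\<^sup>+ z. ennreal (N z) \<partial>lborel) = (\<integral>\<^sup>+ z. ennreal (1 / Z) * ennreal (exp (- \<eta> * c z)) \<partial>lborel)"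
      unfolding N_eq2 using Zpos by (intro nn_integral_cong) (simp add: ennreal_mult'[symmetric])
    also have "\<dots> = ennreal (1 / Z) * ennreal Z" using nnZ by (simp add: nn_integral_cmult)
    also have "\<dots> = 1" using Zpos by (simp add: ennreal_mult'[symmetric])
    finally show ?thesis .
  qed
  have PY: "ennreal (output_density N (PX s \<rho>) y) = (\<integral>\<^sup>+ x. ennreal (PX s \<rho> x) * ennreal (N (y - x)) \<partial>lborel)"
    for s \<rho> y
  proof -
    have fin: "(\<integral>\<^sup>+ x. ennreal (PX s \<rho> x) * ennreal (N (y - x)) \<partial>lborel) \<le> (\<integral>\<^sup>+ x. ennreal (PX s \<rho> x) * ennreal (1 / Z) \<partial>lborel)"
      by (intro nn_integral_mono mult_left_mono ennreal_leI N_le) auto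
    also have "\<dots> = ennreal (1 / Z)" by (simp add: nn_integral_multc PX_prob)
    finally have fin: "(\<integral>\<^sup>+ x. ennreal (PX s \<rho> x) * ennreal (N (y - x)) \<partial>lborel) < \<top>"
      using le_less_trans by fastforce
    have "output_density N (PX s \<rho>) y = enn2real (\<integral>\<^sup>+ x. ennreal (N (y - x) * PX s \<rho> x) \<partial>lborel)"
      unfolding output_density_def
      by (rule integral_eq_nn_integral) (auto intro!: mult_nonneg_nonneg less_imp_le[OF N_pos] PX_nonneg)
    also have "(\<integral>\<^sup>+ x. ennreal (N (y - x) * PX s \<rho> x) \<partial>lborel) = (\<integral>\<^sup>+ x. ennreal (PX s \<rho> x) * ennreal (N (y - x)) \<partial>lborel)"
      by (intro nn_integral_cong) (simp add: ennreal_mult'[symmetric] less_imp_le[OF N_pos] PX_nonneg mult.commute)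
    finally show ?thesis using fin by simp
  qed
  have PYnn: "output_density N (PX s \<rho>) y \<ge> 0" for s \<rho> y
    unfolding output_density_def
    by (rule integral_nonneg_AE) (auto intro!: mult_nonneg_nonneg less_imp_le[OF N_pos] PX_nonneg)
  have main: "renyi_div \<alpha> (output_density N (PX si \<rho>)) (output_density N (PX sj \<rho>)) \<le> ereal \<epsilon>"
    if hyp: "(si, sj) \<in> SS" "\<rho> \<in> Rho" for si sj \<rho>
  proof -
    define \<pi> where "\<pi> = comonotone_coupling (PX si \<rho>) (PX sj \<rho>)"
    define t where "t = th si sj \<rho>"
    have tpos: "t > 0" and tle: "t \<le> \<theta>" using th_pos theta_max hyp by (auto simp: t_def)
    have eta_le: "\<eta> \<le> eta \<kappa> t" using kappa tpos tle
      by (simp add: \<eta>_def eta_def frac_le)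
    have \<pi>prob: "prob_space \<pi>" and \<pi>sets[measurable_cong]: "sets \<pi> = sets borel"
      unfolding \<pi>_def by (rule coupling_prob[OF PX_meas PX_nonneg PX_prob PX_meas PX_nonneg PX_prob])+
    define PYi where "PYi = output_density N (PX si \<rho>)"
    define PYj where "PYj = output_density N (PX sj \<rho>)"
    have PYi: "ennreal (PYi y) = (\<integral>\<^sup>+ p. ennreal (N (y - fst p)) \<partial>\<pi>)" for y
    proof -
      have fm: "(\<lambda>x. ennreal (N (y - x))) \<in> borel_measurable borel" by measurable
      show ?thesis
        using PY[of si \<rho> y] coupling_marginals(1)[OF PX_meas[of si \<rho>] PX_nonneg[of si \<rho>] PX_prob[of si \<rho>]
            PX_meas[of sj \<rho>] PX_nonneg[of sj \<rho>] PX_prob[of sj \<rho>] fm]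
        by (simp add: PYi_def \<pi>_def)
    qed
    have PYj: "ennreal (PYj y) = (\<integral>\<^sup>+ p. ennreal (N (y - snd p)) \<partial>\<pi>)" for y
    proof -
      have fm: "(\<lambda>x. ennreal (N (y - x))) \<in> borel_measurable borel" by measurable
      show ?thesis
        using PY[of sj \<rho> y] coupling_marginals(2)[OF PX_meas[of si \<rho>] PX_nonneg[of si \<rho>] PX_prob[of si \<rho>]
            PX_meas[of sj \<rho>] PX_nonneg[of sj \<rho>] PX_prob[of sj \<rho>] fm]
        by (simp add: PYj_def \<pi>_def)
    qed
    define G where "G y p = ennreal (N (y - fst p) powr \<alpha> * N (y - snd p) powr (1 - \<alpha>))" for y p
    have step1: "ennreal (PYi y powr \<alpha> * PYj y powr (1 - \<alpha>)) \<le> (\<integral>\<^sup>+ p. G y p \<partial>\<pi>)" for y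
    proof (cases "PYi y > 0 \<and> PYj y > 0")
      case True
      show ?thesis unfolding G_def
        by (rule jensen_pair[where M=\<pi>]) (use True PYi PYj N_pos alpha in \<open>auto intro: less_imp_le\<close>)
    next
      case False
      then have "PYi y = 0 \<or> PYj y = 0" using PYnn[of si \<rho> y] PYnn[of sj \<rho> y]
        by (auto simp: PYi_def PYj_def)
      then show ?thesis by auto
    qed
    have psf: "pair_sigma_finite \<pi> lborel"
      unfolding pair_sigma_finite_def
      using prob_space_imp_sigma_finite[OF \<pi>prob] lborel.sigma_finite_measure_axioms by auto
    have step3: "(\<integral>\<^sup>+ y. G y p \<partial>lborel) \<le> ennreal (exp ((\<alpha> - 1) * \<eta> * c (fst p - snd p)))" for p
    proof -
      obtain x x' where p: "p = (x, x')" by (cases p)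
      have Gm: "(\<lambda>y. G y p) \<in> borel_measurable borel" unfolding G_def by measurable
      have "(\<integral>\<^sup>+ y. G y p \<partial>lborel) = (\<integral>\<^sup>+ z. G (x + z) p \<partial>lborel)"
        using nn_integral_real_affine[OF Gm, of 1 x] by simp
      also have "\<dots> \<le> (\<integral>\<^sup>+ z. ennreal (exp ((\<alpha> - 1) * \<eta> * c (x - x'))) * ennreal (N z) \<partial>lborel)"
      proof (rule nn_integral_mono)
        fix z
        have ctri: "c (z + (x - x')) \<le> c z + c (x - x')" using c_tri[of "z + (x - x')" z] by simp
        have "(\<alpha> - 1) * \<eta> * (c (z + (x - x')) - c z) \<le> (\<alpha> - 1) * \<eta> * c (x - x')"
          using ctri alpha eta_pos by (intro mult_left_mono) auto
        moreover have "\<alpha> * (- \<eta> * c z - ln Z) + (1 - \<alpha>) * (- \<eta> * c (z + (x - x')) - ln Z)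
            = (- \<eta> * c z - ln Z) + (\<alpha> - 1) * \<eta> * (c (z + (x - x')) - c z)"
          by (simp add: algebra_simps)
        ultimately have le: "\<alpha> * (- \<eta> * c z - ln Z) + (1 - \<alpha>) * (- \<eta> * c (z + (x - x')) - ln Z)
            \<le> (\<alpha> - 1) * \<eta> * c (x - x') + (- \<eta> * c z - ln Z)" by linarith
        have "G (x + z) p = ennreal (exp (\<alpha> * (- \<eta> * c z - ln Z) + (1 - \<alpha>) * (- \<eta> * c (z + (x - x')) - ln Z)))"
          unfolding G_def p using N_pos[of z] N_pos[of "x + z - x'"]
          by (simp add: powr_def lnN exp_add[symmetric] algebra_simps)
        also have "\<dots> \<le> ennreal (exp ((\<alpha> - 1) * \<eta> * c (x - x') + (- \<eta> * c z - ln Z)))"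
          using le by (intro ennreal_leI) simp
        also have "\<dots> = ennreal (exp ((\<alpha> - 1) * \<eta> * c (x - x'))) * ennreal (N z)"
          by (simp add: N_eq exp_add ennreal_mult'[symmetric])
        finally show "G (x + z) p \<le> ennreal (exp ((\<alpha> - 1) * \<eta> * c (x - x'))) * ennreal (N z)" .
      qed
      also have "\<dots> = ennreal (exp ((\<alpha> - 1) * \<eta> * c (fst p - snd p)))"
        by (simp add: nn_integral_cmult N_int p)
      finally show ?thesis .
    qed
    have cmp: "(\<alpha> - 1) * \<eta> \<le> \<alpha> * eta \<kappa> t"
      using eta_le eta_pos alpha by (intro mult_mono) auto
    have "(\<integral>\<^sup>+ y. ennreal (PYi y powr \<alpha> * PYj y powr (1 - \<alpha>)) \<partial>lborel) \<le> (\<integral>\<^sup>+ y. (\<integral>\<^sup>+ p. G y p \<partial>\<pi>) \<partial>lborel)"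
      by (intro nn_integral_mono step1)
    also have "\<dots> = (\<integral>\<^sup>+ p. (\<integral>\<^sup>+ y. G y p \<partial>lborel) \<partial>\<pi>)"
      by (rule pair_sigma_finite.Fubini'[OF psf, where f="\<lambda>p y. G y p"]) (unfold G_def, measurable)
    also have "\<dots> \<le> (\<integral>\<^sup>+ p. ennreal (exp ((\<alpha> - 1) * \<eta> * c (fst p - snd p))) \<partial>\<pi>)"
      by (intro nn_integral_mono step3)
    also have "\<dots> \<le> (\<integral>\<^sup>+ p. ennreal (exp (\<alpha> * eta \<kappa> t * c (fst p - snd p))) \<partial>\<pi>)"
      by (intro nn_integral_mono ennreal_leI)
        (simp add: mult_right_mono[OF cmp c_nonneg])
    also have "\<dots> = ennreal (exp ((\<alpha> - 1) * \<epsilon>))"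
      using th_eq[OF hyp] by (simp add: \<pi>_def t_def)
    finally have Ile: "(\<integral>\<^sup>+ y. ennreal (PYi y powr \<alpha> * PYj y powr (1 - \<alpha>)) \<partial>lborel) \<le> ennreal (exp ((\<alpha> - 1) * \<epsilon>))" .
    define I where "I = (\<integral>\<^sup>+ y. ennreal (PYi y powr \<alpha> * PYj y powr (1 - \<alpha>)) \<partial>lborel)"
    have Ifin: "I \<noteq> \<infinity>" using Ile unfolding I_def by (auto simp: top_unique)
    have Ir: "enn2real I \<le> exp ((\<alpha> - 1) * \<epsilon>)"
      using enn2real_mono[OF Ile] unfolding I_def by simp
    have "ln (enn2real I) / (\<alpha> - 1) \<le> \<epsilon>"
    proof (cases "enn2real I > 0")
      case True
      then have "ln (enn2real I) \<le> (\<alpha> - 1) * \<epsilon>" using Ir by (metis ln_exp ln_le_cancel_iff exp_gt_zero)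
      then show ?thesis using alpha by (simp add: divide_le_eq mult.commute)
    next
      case False
      then have "enn2real I = 0" using enn2real_nonneg[of I] by linarith
      then show ?thesis using eps by simp
    qed
    then show ?thesis
      unfolding renyi_div_def Let_def PYi_def[symmetric] PYj_def[symmetric] I_def[symmetric]
      using Ifin by simp
  qed
  show ?thesis
    unfolding renyi_pufferfish_private_def N_def[symmetric]
    using main by auto
qed

end
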